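(* Let $r$ be a positive integer and $\chi(i,j)=e^{2\pi i\, ijr/(2r+1)}$ on $\mathbb Z/(2r+1)$, and $\tau\in\{\pm1\}$. For each $n\in(\mathbb Z/(2r+1))^\times$ with $n^2=1$ there is a monoidal auto-equivalence $\mathcal F_n$ of $\mathcal{TY}(\mathbb Z/(2r+1),\chi,\tau)$ with $\mathcal F_n(m)=m$, $\mathcal F_n(i)=ni$, and trivial tensorator; and $n\mapsto\mathcal F_n$ is a group isomorphism $\{n\in(\mathbb Z/(2r+1))^\times: n^2=1\}\to\mathrm{TenAut}(\mathcal{TY}(\mathbb Z/(2r+1),\chi,\tau))$.
   Context: The Tambara–Yamagami category $\mathcal{TY}(G,\chi,\tau)$ (for $G$ finite abelian, $\chi$ a nondegenerate symmetric bicharacter, $\tau=\pm1$) has simple objects $G\sqcup\{m\}$, fusion $i\otimes j=i+j$, $i\otimes m=m\otimes i=m$, $m\otimes m=\bigoplus_{g\in G} g$, and trivial associators except $\alpha_{i,m,j}=\chi(i,j)\mathrm{id}_m$, $(\alpha_{m,i,m})_{j,j}=\chi(i,j)\mathrm{id}_j$, $(\alpha_{m,m,m})_{i,j}=\frac{\tau}{\sqrt{|G|}}\chi(i,j)^{-1}$. $\mathrm{TenAut}$ is the group of monoidal auto-equivalences up to monoidal natural isomorphism. *)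

theory Defs
  imports Complex_Main "HOL-Algebra.Group"
begin

text \<open>Simple objects: Gr i (i in {0..<N}, representing Z/N) and the object m (Mo).\<close>

datatype ty_obj = Gr int | Mo

definition ty_simples :: "int \<Rightarrow> ty_obj set" where
  "ty_simples N = Gr ` {0..<N} \<union> {Mo}"

text \<open>Fusion rules: ty_fus N a b c means that c occurs (with multiplicity one) in a \<otimes> b.\<close>
fun ty_fus :: "int \<Rightarrow> ty_obj \<Rightarrow> ty_obj \<Rightarrow> ty_obj \<Rightarrow> bool" where
  "ty_fus N (Gr i) (Gr j) c = (c = Gr ((i + j) mod N))"
| "ty_fus N (Gr i) Mo c = (c = Mo)"
| "ty_fus N Mo (Gr j) c = (c = Mo)"
| "ty_fus N Mo Mo c = (c \<in> Gr ` {0..<N})"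

text \<open>For simples a b c d, the space Hom(d,(a\<otimes>b)\<otimes>c) has a
  basis indexed by e with e in a\<otimes>b, d in e\<otimes>c, and Hom(d,a\<otimes>(b\<otimes>c)) a basis indexed by
  f with f in b\<otimes>c, d in a\<otimes>f.  ty_F N chi tau a b c d e f is the matrix entry of
  the associator alpha_{a,b,c} on the d-isotypic part, from basis vector e to basis
  vector f.\<close>
fun ty_F :: "int \<Rightarrow> (int \<Rightarrow> int \<Rightarrow> complex) \<Rightarrow> complex \<Rightarrow>
    ty_obj \<Rightarrow> ty_obj \<Rightarrow> ty_obj \<Rightarrow> ty_obj \<Rightarrow> ty_obj \<Rightarrow> ty_obj \<Rightarrow> complex" where
  "ty_F N chi tau (Gr i) Mo (Gr j) d e f = chi i j"
| "ty_F N chi tau Mo (Gr i) Mo (Gr j) e f = chi i j"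
| "ty_F N chi tau Mo Mo Mo Mo (Gr i) (Gr j) =
     tau / complex_of_real (sqrt (real_of_int N)) * inverse (chi i j)"
| "ty_F N chi tau a b c d e f = 1"

definition ty_adm :: "int \<Rightarrow> ty_obj \<Rightarrow> ty_obj \<Rightarrow> ty_obj \<Rightarrow> ty_obj \<Rightarrow> ty_obj \<Rightarrow> ty_obj \<Rightarrow> bool" where
  "ty_adm N a b c d e f \<longleftrightarrow>
     {a, b, c, d, e, f} \<subseteq> ty_simples N \<and>
     ty_fus N a b e \<and> ty_fus N e c d \<and> ty_fus N b c f \<and> ty_fus N a f d"

text \<open>Skeletal data of a (linear) monoidal auto-equivalence: a permutation phi of the
  simple objects together with the tensorator J, where J a b c is the (nonzero) scalar
  by which J_{a,b} : F(a)\<otimes>F(b) \<rightarrow> F(a\<otimes>b) acts on the c-summand.\<close>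
type_synonym ty_fun = "(ty_obj \<Rightarrow> ty_obj) \<times> (ty_obj \<Rightarrow> ty_obj \<Rightarrow> ty_obj \<Rightarrow> complex)"

definition ty_autoeq :: "int \<Rightarrow> (int \<Rightarrow> int \<Rightarrow> complex) \<Rightarrow> complex \<Rightarrow> ty_fun \<Rightarrow> bool" where
  "ty_autoeq N chi tau FJ \<longleftrightarrow>
     (let \<phi> = fst FJ; J = snd FJ; S = ty_simples N in
       bij_betw \<phi> S S \<and>
       (\<forall>a\<in>S. \<forall>b\<in>S. \<forall>c\<in>S. ty_fus N (\<phi> a) (\<phi> b) (\<phi> c) = ty_fus N a b c) \<and>
       (\<forall>a\<in>S. \<forall>b\<in>S. \<forall>c\<in>S. ty_fus N a b c \<longrightarrow> J a b c \<noteq> 0) \<and>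
       (\<forall>a\<in>S. J (Gr 0) a a = 1 \<and> J a (Gr 0) a = 1) \<and>
       (\<forall>a b c d e f. ty_adm N a b c d e f \<longrightarrow>
          J a b e * J e c d * ty_F N chi tau a b c d e f =
          ty_F N chi tau (\<phi> a) (\<phi> b) (\<phi> c) (\<phi> d) (\<phi> e) (\<phi> f) * J b c f * J a f d))"

definition ty_auts :: "int \<Rightarrow> (int \<Rightarrow> int \<Rightarrow> complex) \<Rightarrow> complex \<Rightarrow> ty_fun set" where
  "ty_auts N chi tau = {FJ. ty_autoeq N chi tau FJ}"

definition ty_moniso :: "int \<Rightarrow> (int \<Rightarrow> int \<Rightarrow> complex) \<Rightarrow> complex \<Rightarrow> ty_fun rel" where
  "ty_moniso N chi tau =
     {(FJ, GK). FJ \<in> ty_auts N chi tau \<and> GK \<in> ty_auts N chi tau \<and>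
        (\<forall>a\<in>ty_simples N. fst FJ a = fst GK a) \<and>
        (\<exists>\<eta> :: ty_obj \<Rightarrow> complex. (\<forall>a\<in>ty_simples N. \<eta> a \<noteq> 0) \<and>
           (\<forall>a\<in>ty_simples N. \<forall>b\<in>ty_simples N. \<forall>c\<in>ty_simples N. ty_fus N a b c \<longrightarrow>
              \<eta> c * snd FJ a b c = snd GK a b c * \<eta> a * \<eta> b))}"

definition ty_comp :: "ty_fun \<Rightarrow> ty_fun \<Rightarrow> ty_fun" where
  "ty_comp FJ GK = (fst FJ \<circ> fst GK,
     \<lambda>a b c. snd FJ (fst GK a) (fst GK b) (fst GK c) * snd GK a b c)"

definition ty_id :: ty_fun where
  "ty_id = (id, \<lambda>a b c. 1)"

definition TenAut :: "int \<Rightarrow> (int \<Rightarrow> int \<Rightarrow> complex) \<Rightarrow> complex \<Rightarrow> ty_fun set monoid" where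
  "TenAut N chi tau =
     \<lparr> carrier = ty_auts N chi tau // ty_moniso N chi tau,
       mult = (\<lambda>X Y. ty_moniso N chi tau `` {ty_comp (SOME x. x \<in> X) (SOME y. y \<in> Y)}),
       one = ty_moniso N chi tau `` {ty_id} \<rparr>"

fun ty_mult_obj :: "int \<Rightarrow> int \<Rightarrow> ty_obj \<Rightarrow> ty_obj" where
  "ty_mult_obj N n (Gr i) = Gr ((n * i) mod N)"
| "ty_mult_obj N n Mo = Mo"

definition ty_Fn :: "int \<Rightarrow> int \<Rightarrow> ty_fun" where
  "ty_Fn N n = (ty_mult_obj N n, \<lambda>a b c. 1)"

definition sq1_group :: "int \<Rightarrow> int monoid" where
  "sq1_group N =
     \<lparr> carrier = {n \<in> {0..<N}. coprime n N \<and> (n * n) mod N = 1 mod N},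
       mult = (\<lambda>a b. (a * b) mod N),
       one = 1 mod N \<rparr>"

definition ty_chi :: "nat \<Rightarrow> int \<Rightarrow> int \<Rightarrow> complex" where
  "ty_chi r i j = exp (2 * complex_of_real pi * \<i> * of_int (i * j * int r) / of_int (2 * int r + 1))"

end

theory Submission
  imports Defs "HOL-Analysis.Complex_Transcendental"
begin

lemma exp_cong_eq:
  fixes N x y :: int
  assumes "N > 0" "x mod N = y mod N"
  shows "exp (2 * complex_of_real pi * \<i> * of_int x / of_int N) =
         exp (2 * complex_of_real pi * \<i> * of_int y / of_int N)"
proof -
  obtain k where k: "x = y + N * k"
    using assms(2) by (metis mod_eqE mult.commute)
  have "2 * complex_of_real pi * \<i> * of_int x / of_int N =
        2 * complex_of_real pi * \<i> * of_int y / of_int N + \<i> * (of_int k * (of_real pi * 2))"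
    using assms(1) by (simp add: k field_simps)
  then show ?thesis by (simp only: exp_plus_2pin)
qed

lemma exp_eq_cong:
  fixes N x y :: int
  assumes "N > 0"
  and "exp (2 * complex_of_real pi * \<i> * of_int x / of_int N) =
         exp (2 * complex_of_real pi * \<i> * of_int y / of_int N)"
  shows "x mod N = y mod N"
proof -
  obtain n :: int where n: "2 * complex_of_real pi * \<i> * of_int x / of_int N =
         2 * complex_of_real pi * \<i> * of_int y / of_int N + (of_int (2 * n) * pi) * \<i>"
    using assms(2) exp_eq by blast
  hence "2 * complex_of_real pi * \<i> * of_int x = 2 * complex_of_real pi * \<i> * (of_int y + of_int n * of_int N)"
    using assms(1) by (simp add: field_simps)
  hence "complex_of_int x = of_int y + of_int n * of_int N"
    using pi_neq_zero by simp
  hence "x = y + n * N" by (metis of_int_add of_int_eq_iff of_int_mult)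
  thus ?thesis by simp
qed

lemma ty_chi_inv:
  fixes n i j :: int
  assumes "(n * n) mod (2 * int r + 1) = 1 mod (2 * int r + 1)"
  shows "ty_chi r ((n * i) mod (2 * int r + 1)) ((n * j) mod (2 * int r + 1)) = ty_chi r i j"
proof -
  let ?N = "2 * int r + 1"
  have "((n * i) mod ?N * ((n * j) mod ?N) * int r) mod ?N = ((n * n) * (i * j * int r)) mod ?N"
    by (metis (no_types, lifting) mod_mult_left_eq mod_mult_right_eq mult.assoc mult.left_commute)
  also have "\<dots> = (1 * (i * j * int r)) mod ?N"
    using assms by (metis mod_mult_left_eq)
  finally show ?thesis unfolding ty_chi_def
    by (intro exp_cong_eq) auto
qed

lemma ty_chi_sq1:
  fixes n :: int
  assumes "r > 0" "ty_chi r 1 1 = ty_chi r n n"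
  shows "(n * n) mod (2 * int r + 1) = 1 mod (2 * int r + 1)"
proof -
  let ?N = "2 * int r + 1"
  have "(1 * 1 * int r) mod ?N = (n * n * int r) mod ?N"
    using assms(2) unfolding ty_chi_def by (intro exp_eq_cong) auto
  hence "?N dvd (n * n - 1) * int r"
    by (metis mod_eq_dvd_iff left_diff_distrib' mult_1)
  moreover have "coprime ?N (int r)"
  proof (rule coprimeI)
    fix c assume c: "c dvd ?N" "c dvd int r"
    hence "c dvd ?N - 2 * int r" by (metis dvd_diff dvd_mult)
    thus "is_unit c" by simp
  qed
  ultimately have "?N dvd (n * n - 1)"
    using coprime_dvd_mult_left_iff by blast
  thus ?thesis by (metis mod_eq_dvd_iff)
qed

lemma sq1_coprime:
  fixes n N :: int
  assumes "(n * n) mod N = 1 mod N"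
  shows "coprime n N"
proof (rule coprimeI)
  fix c assume c: "c dvd n" "c dvd N"
  obtain k where k: "n * n - 1 = N * k" using assms by (metis mod_eq_dvd_iff dvdE)
  have "c dvd n * n - N * k" using c by simp
  hence "c dvd 1" using k by (metis add_diff_cancel_left' diff_add_cancel diff_diff_eq2 dvd_minus_iff minus_diff_eq)
  thus "is_unit c" by simp
qed

lemma mult_obj_invol:
  assumes "N > 0" "(n * n) mod N = 1 mod N" "a \<in> ty_simples N"
  shows "ty_mult_obj N n (ty_mult_obj N n a) = a"
proof (cases a)
  case (Gr i)
  with assms(3) have i: "0 \<le> i" "i < N" by (auto simp: ty_simples_def)
  have "(n * ((n * i) mod N)) mod N = ((n * n) * i) mod N"
    by (metis mod_mult_right_eq mult.assoc)
  also have "\<dots> = (1 * i) mod N" using assms(2) by (metis mod_mult_left_eq)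
  also have "\<dots> = i" using i by simp
  finally show ?thesis using Gr by simp
qed simp

lemma mult_obj_S:
  assumes "N > 0" "a \<in> ty_simples N"
  shows "ty_mult_obj N n a \<in> ty_simples N"
  using assms by (cases a) (auto simp: ty_simples_def)

lemma mult_obj_add:
  "ty_mult_obj N n (Gr ((i + j) mod N)) = Gr ((n * i mod N + n * j mod N) mod N)"
  by (simp add: mod_add_eq mod_mult_right_eq distrib_left)

lemma Fn_autoeq:
  assumes N: "N > 1" and n2: "(n * n) mod N = 1 mod N"
    and chi: "\<And>i j. chi ((n * i) mod N) ((n * j) mod N) = chi i j"
  shows "ty_autoeq N chi tau (ty_Fn N n)"
proof -
  let ?f = "ty_mult_obj N n" and ?S = "ty_simples N"
  have inv: "\<And>a. a \<in> ?S \<Longrightarrow> ?f (?f a) = a" using mult_obj_invol N n2 by simp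
  have inS: "\<And>a. a \<in> ?S \<Longrightarrow> ?f a \<in> ?S" using mult_obj_S N by simp
  have bij: "bij_betw ?f ?S ?S"
    by (rule bij_betw_byWitness[where f'="?f"]) (use inv inS in auto)
  have inj: "\<And>a b. a \<in> ?S \<Longrightarrow> b \<in> ?S \<Longrightarrow> ?f a = ?f b \<longleftrightarrow> a = b"
    by (metis inv)
  have fus: "ty_fus N (?f a) (?f b) (?f c) = ty_fus N a b c"
    if a: "a \<in> ?S" and b: "b \<in> ?S" and c: "c \<in> ?S" for a b c
  proof (cases a; cases b)
    fix i j assume ai: "a = Gr i" and bj: "b = Gr j"
    have s: "Gr ((i + j) mod N) \<in> ?S" using N by (auto simp: ty_simples_def)
    have "ty_fus N (?f a) (?f b) (?f c) = (?f c = ?f (Gr ((i + j) mod N)))"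
      using ai bj by (simp only: mult_obj_add) simp
    also have "\<dots> = (c = Gr ((i + j) mod N))" using inj[OF c s] .
    finally show ?thesis using ai bj by simp
  next
    fix i assume "a = Gr i" "b = Mo"
    then show ?thesis by (cases c) auto
  next
    fix i assume "a = Mo" "b = Gr i"
    then show ?thesis by (cases c) auto
  next
    assume "a = Mo" "b = Mo"
    then show ?thesis using c N by (cases c) (auto simp: ty_simples_def)
  qed
  have hex: "ty_F N chi tau a b c d e f = ty_F N chi tau (?f a) (?f b) (?f c) (?f d) (?f e) (?f f)"
    for a b c d e f
    by (cases a; cases b; cases c; cases d; cases e; cases f) (simp_all add: chi)
  show ?thesis
    unfolding ty_autoeq_def ty_Fn_def Let_def
    using bij fus hex by auto
qed

lemma autoeqD:
  assumes "ty_autoeq N chi tau (\<phi>, J)"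
  shows "bij_betw \<phi> (ty_simples N) (ty_simples N)"
    and "\<And>a b c. a \<in> ty_simples N \<Longrightarrow> b \<in> ty_simples N \<Longrightarrow> c \<in> ty_simples N \<Longrightarrow>
           ty_fus N (\<phi> a) (\<phi> b) (\<phi> c) = ty_fus N a b c"
    and "\<And>a b c. a \<in> ty_simples N \<Longrightarrow> b \<in> ty_simples N \<Longrightarrow> c \<in> ty_simples N \<Longrightarrow>
           ty_fus N a b c \<Longrightarrow> J a b c \<noteq> 0"
    and "\<And>a. a \<in> ty_simples N \<Longrightarrow> J (Gr 0) a a = 1"
    and "\<And>a. a \<in> ty_simples N \<Longrightarrow> J a (Gr 0) a = 1"
    and "\<And>a b c d e f. ty_adm N a b c d e f \<Longrightarrow>
          J a b e * J e c d * ty_F N chi tau a b c d e f =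
          ty_F N chi tau (\<phi> a) (\<phi> b) (\<phi> c) (\<phi> d) (\<phi> e) (\<phi> f) * J b c f * J a f d"
  using assms unfolding ty_autoeq_def Let_def by auto

lemma phi_facts:
  assumes A: "ty_autoeq N chi tau (\<phi>, J)" and N: "N > 1"
  shows "\<phi> (Gr 0) = Gr 0" and "\<phi> Mo = Mo"
    and "\<And>i. 0 \<le> i \<Longrightarrow> i < N \<Longrightarrow> \<exists>j. \<phi> (Gr i) = Gr j \<and> 0 \<le> j \<and> j < N"
proof -
  let ?S = "ty_simples N"
  note bij = autoeqD(1)[OF A] and fus = autoeqD(2)[OF A]
  have MoS: "Mo \<in> ?S" and G0: "Gr 0 \<in> ?S" and G1: "Gr 1 \<in> ?S" using N by (auto simp: ty_simples_def)
  have inS: "\<And>a. a \<in> ?S \<Longrightarrow> \<phi> a \<in> ?S" using bij bij_betwE by blast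
  have inj: "\<And>a b. a \<in> ?S \<Longrightarrow> b \<in> ?S \<Longrightarrow> \<phi> a = \<phi> b \<Longrightarrow> a = b"
    using bij by (metis bij_betw_def inj_onD)
  obtain m where m: "m \<in> ?S" "\<phi> m = Mo" using bij MoS by (metis bij_betw_def imageE)
  obtain z where z: "z \<in> ?S" "\<phi> z = Gr 0" using bij G0 by (metis bij_betw_def imageE)
  have u1: "ty_fus N (\<phi> (Gr 0)) Mo Mo" using fus[OF G0 m(1) m(1)] m by (cases m) (auto simp: ty_simples_def)
  have u2: "ty_fus N (\<phi> (Gr 0)) (Gr 0) (Gr 0)" using fus[OF G0 z(1) z(1)] z by (cases z) (auto simp: ty_simples_def)
  show g0: "\<phi> (Gr 0) = Gr 0"
  proof (cases "\<phi> (Gr 0)")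
    case (Gr k)
    with inS[OF G0] have "0 \<le> k" "k < N" by (auto simp: ty_simples_def)
    with u2 Gr show ?thesis by simp
  next
    case Mo with u1 show ?thesis by auto
  qed
  have f1: "ty_fus N (\<phi> Mo) (\<phi> (Gr 1)) (\<phi> Mo)" using fus[OF MoS G1 MoS] by simp
  show "\<phi> Mo = Mo"
  proof (cases "\<phi> Mo")
    case (Gr i)
    show ?thesis
    proof (cases "\<phi> (Gr 1)")
      case (Gr j)
      with inS[OF G1] have "0 \<le> j" "j < N" by (auto simp: ty_simples_def)
      moreover from inS[OF MoS] \<open>\<phi> Mo = Gr i\<close> have "0 \<le> i" "i < N" by (auto simp: ty_simples_def)
      moreover have "Gr i = Gr ((i + j) mod N)" using f1 Gr \<open>\<phi> Mo = Gr i\<close> by simp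
      ultimately have "j = 0"
        by (metis add_cancel_left_right add_diff_cancel_left' mod_add_self2 mod_diff_eq mod_pos_pos_trivial ty_obj.inject diff_self mod_0)
      hence "\<phi> (Gr 1) = \<phi> (Gr 0)" using Gr g0 by simp
      hence "Gr 1 = Gr 0" using inj[OF G1 G0] by simp
      thus ?thesis by simp
    next
      case Mo
      with f1 \<open>\<phi> Mo = Gr i\<close> show ?thesis by simp
    qed
  qed
  fix i :: int assume i: "0 \<le> i" "i < N"
  hence Gi: "Gr i \<in> ?S" by (auto simp: ty_simples_def)
  have "\<phi> (Gr i) \<noteq> Mo" using inj[OF Gi MoS] \<open>\<phi> Mo = Mo\<close> by auto
  with inS[OF Gi] show "\<exists>j. \<phi> (Gr i) = Gr j \<and> 0 \<le> j \<and> j < N"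
    by (auto simp: ty_simples_def)
qed

lemma mod_sub_back:
  fixes g k N :: int
  assumes "0 \<le> k" "k < N"
  shows "(g + (k - g) mod N) mod N = k"
proof -
  have "(g + (k - g) mod N) mod N = (g + (k - g)) mod N" by (rule mod_add_right_eq)
  thus ?thesis using assms by simp
qed

lemma mod_sub_back':
  fixes g k N :: int
  assumes "0 \<le> k" "k < N"
  shows "((k - g) mod N + g) mod N = k"
  using mod_sub_back[OF assms, of g] by (simp add: add.commute)

lemma phi_mult:
  assumes A: "ty_autoeq N chi tau (\<phi>, J)" and N: "N > 1"
  obtains n where "0 \<le> n" "n < N" "\<And>i. 0 \<le> i \<Longrightarrow> i < N \<Longrightarrow> \<phi> (Gr i) = Gr ((n * i) mod N)"
proof -
  let ?S = "ty_simples N"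
  note fus = autoeqD(2)[OF A] and pf = phi_facts[OF A N]
  obtain n where n: "\<phi> (Gr 1) = Gr n" "0 \<le> n" "n < N" using pf(3)[of 1] N by auto
  have *: "int k < N \<Longrightarrow> \<phi> (Gr (int k)) = Gr ((n * int k) mod N)" for k
  proof (induction k)
    case 0 then show ?case using pf(1) by simp
  next
    case (Suc k)
    then have k: "int k < N" by simp
    have S: "Gr (int k) \<in> ?S" "Gr 1 \<in> ?S" "Gr (int (Suc k)) \<in> ?S"
      using Suc.prems N by (auto simp: ty_simples_def)
    have "ty_fus N (Gr (int k)) (Gr 1) (Gr (int (Suc k)))" using Suc.prems by simp
    hence "ty_fus N (\<phi> (Gr (int k))) (\<phi> (Gr 1)) (\<phi> (Gr (int (Suc k))))"
      using fus[OF S] by simp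
    hence "\<phi> (Gr (int (Suc k))) = Gr ((n * int k mod N + n) mod N)"
      using Suc.IH[OF k] n by simp
    also have "(n * int k mod N + n) mod N = (n * int (Suc k)) mod N"
    proof -
      have "(n * int k mod N + n) mod N = (n * int k + n) mod N" by (rule mod_add_left_eq)
      thus ?thesis by (simp add: distrib_left ac_simps)
    qed
    finally show ?case .
  qed
  show ?thesis
  proof (rule that[OF n(2,3)])
    fix i :: int assume "0 \<le> i" "i < N"
    then show "\<phi> (Gr i) = Gr ((n * i) mod N)" using *[of "nat i"] by simp
  qed
qed

lemma chi_invariant:
  assumes A: "ty_autoeq N chi tau (\<phi>, J)" and N: "N > 1"
    and phi: "\<And>i. 0 \<le> i \<Longrightarrow> i < N \<Longrightarrow> \<phi> (Gr i) = Gr ((n * i) mod N)"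
    and i: "0 \<le> i" "i < N" and j: "0 \<le> j" "j < N"
  shows "chi i j = chi ((n * i) mod N) ((n * j) mod N)"
proof -
  let ?S = "ty_simples N"
  note pf = phi_facts[OF A N]
  have S: "Gr i \<in> ?S" "Gr j \<in> ?S" "Mo \<in> ?S" using i j by (auto simp: ty_simples_def)
  have adm: "ty_adm N (Gr i) Mo (Gr j) Mo Mo Mo" using S by (simp add: ty_adm_def)
  have h: "J (Gr i) Mo Mo * J Mo (Gr j) Mo * chi i j =
      chi ((n * i) mod N) ((n * j) mod N) * J Mo (Gr j) Mo * J (Gr i) Mo Mo"
    using autoeqD(6)[OF A adm] phi[OF i] phi[OF j] pf(2) by simp
  have "J (Gr i) Mo Mo \<noteq> 0" "J Mo (Gr j) Mo \<noteq> 0" using autoeqD(3)[OF A] S by auto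
  with h show ?thesis by (simp add: field_simps)
qed

lemma gauge:
  assumes A: "ty_autoeq N chi tau (\<phi>, J)" and N: "N > 1"
  obtains \<eta> where "\<forall>a\<in>ty_simples N. \<eta> a \<noteq> 0"
    "\<forall>a\<in>ty_simples N. \<forall>b\<in>ty_simples N. \<forall>c\<in>ty_simples N. ty_fus N a b c \<longrightarrow>
              \<eta> c * J a b c = 1 * \<eta> a * \<eta> b"
proof -
  let ?S = "ty_simples N"
  note pf = phi_facts[OF A N] and hex = autoeqD(6)[OF A] and nz = autoeqD(3)[OF A]
  obtain n where n: "0 \<le> n" "n < N" "\<And>i. 0 \<le> i \<Longrightarrow> i < N \<Longrightarrow> \<phi> (Gr i) = Gr ((n * i) mod N)"
    using phi_mult[OF A N] by blast
  define c where "c = J Mo Mo (Gr 0)"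
  define \<eta> where "\<eta> a = (case a of Gr g \<Rightarrow> J (Gr g) Mo Mo | Mo \<Rightarrow> csqrt c)" for a
  have MoS: "Mo \<in> ?S" and G0: "Gr 0 \<in> ?S" using N by (auto simp: ty_simples_def)
  have GS: "Gr g \<in> ?S \<longleftrightarrow> 0 \<le> g \<and> g < N" for g by (auto simp: ty_simples_def)
  have c0: "c \<noteq> 0" unfolding c_def using nz[OF MoS MoS G0] N by simp
  have hA: "\<eta> (Gr ((g + h) mod N)) * J (Gr g) (Gr h) (Gr ((g + h) mod N)) = \<eta> (Gr g) * \<eta> (Gr h)"
    if g: "0 \<le> g" "g < N" and h: "0 \<le> h" "h < N" for g h
  proof -
    have adm: "ty_adm N (Gr g) (Gr h) Mo Mo (Gr ((g + h) mod N)) Mo"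
      using g h N by (simp add: ty_adm_def ty_simples_def)
    show ?thesis using hex[OF adm] n(3)[OF g] n(3)[OF h] pf N
      by (simp add: \<eta>_def mult.commute)
  qed
  have h5: "J (Gr g) Mo Mo * J Mo Mo (Gr k) = J Mo Mo (Gr ((k - g) mod N)) * J (Gr g) (Gr ((k - g) mod N)) (Gr k)"
    if g: "0 \<le> g" "g < N" and k: "0 \<le> k" "k < N" for g k
  proof -
    have adm: "ty_adm N (Gr g) Mo Mo (Gr k) Mo (Gr ((k - g) mod N))"
      using g k N by (simp add: ty_adm_def ty_simples_def mod_sub_back)
    show ?thesis using hex[OF adm] n(3)[OF g] n(3)[OF k] pf N
      by (simp add: mult.commute)
  qed
  have h6: "J Mo Mo (Gr ((k - g) mod N)) * J (Gr ((k - g) mod N)) (Gr g) (Gr k) = J Mo (Gr g) Mo * J Mo Mo (Gr k)"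
    if g: "0 \<le> g" "g < N" and k: "0 \<le> k" "k < N" for g k
  proof -
    have adm: "ty_adm N Mo Mo (Gr g) (Gr k) (Gr ((k - g) mod N)) Mo"
      using g k N by (simp add: ty_adm_def ty_simples_def mod_sub_back')
    have m: "0 \<le> (k - g) mod N" "(k - g) mod N < N" using N by auto
    show ?thesis using hex[OF adm] n(3)[OF g] n(3)[OF k] n(3)[OF m] pf N
      by (simp add: mult.commute)
  qed
  have e5: "\<eta> (Gr g) * J Mo Mo (Gr g) = c" if g: "0 \<le> g" "g < N" for g
    using h5[OF g g] autoeqD(5)[OF A, of "Gr g"] g by (simp add: \<eta>_def c_def GS)
  have e6: "J Mo (Gr g) Mo * J Mo Mo (Gr g) = c" if g: "0 \<le> g" "g < N" for g
    using h6[OF g g] autoeqD(4)[OF A, of "Gr g"] g by (simp add: c_def GS)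
  have eB: "J Mo (Gr g) Mo = \<eta> (Gr g)" if g: "0 \<le> g" "g < N" for g
  proof -
    have "J Mo Mo (Gr g) \<noteq> 0" using nz[OF MoS MoS] g by (simp add: GS)
    thus ?thesis using e5[OF g] e6[OF g] by (metis mult_right_cancel)
  qed
  show ?thesis
  proof (rule that)
    show "\<forall>a\<in>?S. \<eta> a \<noteq> 0"
    proof
      fix a assume a: "a \<in> ?S"
      show "\<eta> a \<noteq> 0"
      proof (cases a)
        case (Gr g) thus ?thesis using nz[OF a MoS MoS] by (simp add: \<eta>_def)
      next
        case Mo thus ?thesis using c0 by (simp add: \<eta>_def)
      qed
    qed
    show "\<forall>a\<in>?S. \<forall>b\<in>?S. \<forall>d\<in>?S. ty_fus N a b d \<longrightarrow> \<eta> d * J a b d = 1 * \<eta> a * \<eta> b"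
    proof (intro ballI impI)
      fix a b d assume a: "a \<in> ?S" and b: "b \<in> ?S" and d: "d \<in> ?S" and f: "ty_fus N a b d"
      show "\<eta> d * J a b d = 1 * \<eta> a * \<eta> b"
      proof (cases a; cases b)
        fix g h assume "a = Gr g" "b = Gr h"
        thus ?thesis using hA[of g h] a b f by (simp add: GS)
      next
        fix g assume "a = Gr g" "b = Mo"
        thus ?thesis using f by (simp add: \<eta>_def mult.commute)
      next
        fix g assume "a = Mo" "b = Gr g"
        thus ?thesis using f eB[of g] b by (simp add: \<eta>_def GS mult.commute)
      next
        assume "a = Mo" "b = Mo"
        then obtain k where k: "d = Gr k" "0 \<le> k" "k < N" using f by auto
        have "\<eta> Mo * \<eta> Mo = c" by (simp add: \<eta>_def power2_eq_square[symmetric])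
        thus ?thesis using e5[OF k(2,3)] k \<open>a = Mo\<close> \<open>b = Mo\<close> by simp
      qed
    qed
  qed
qed

lemma moniso_equiv: "equiv (ty_auts N chi tau) (ty_moniso N chi tau)"
proof (rule equivI)
  show "ty_moniso N chi tau \<subseteq> ty_auts N chi tau \<times> ty_auts N chi tau"
    by (auto simp: ty_moniso_def)
  show "refl_on (ty_auts N chi tau) (ty_moniso N chi tau)"
  proof (rule refl_onI)
    fix x assume "x \<in> ty_auts N chi tau"
    then show "(x, x) \<in> ty_moniso N chi tau"
      unfolding ty_moniso_def by (auto intro!: exI[of _ "\<lambda>_. 1"])
  qed
  show "sym (ty_moniso N chi tau)"
  proof (rule symI)
    fix x y assume "(x, y) \<in> ty_moniso N chi tau"
    then obtain \<eta> where x: "x \<in> ty_auts N chi tau" "y \<in> ty_auts N chi tau"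
      "\<forall>a\<in>ty_simples N. fst x a = fst y a" "\<forall>a\<in>ty_simples N. \<eta> a \<noteq> 0"
      "\<forall>a\<in>ty_simples N. \<forall>b\<in>ty_simples N. \<forall>c\<in>ty_simples N. ty_fus N a b c \<longrightarrow>
              \<eta> c * snd x a b c = snd y a b c * \<eta> a * \<eta> b"
      unfolding ty_moniso_def by auto
    show "(y, x) \<in> ty_moniso N chi tau"
      unfolding ty_moniso_def
    proof (simp add: x(1,2), intro conjI exI[of _ "\<lambda>a. inverse (\<eta> a)"])
      show "\<forall>a\<in>ty_simples N. fst y a = fst x a" using x(3) by simp
      show "\<forall>a\<in>ty_simples N. inverse (\<eta> a) \<noteq> 0" using x(4) by simp
      show "\<forall>a\<in>ty_simples N. \<forall>b\<in>ty_simples N. \<forall>c\<in>ty_simples N. ty_fus N a b c \<longrightarrow>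
          inverse (\<eta> c) * snd y a b c = snd x a b c * inverse (\<eta> a) * inverse (\<eta> b)"
      proof (intro ballI impI)
        fix a b c assume abc: "a \<in> ty_simples N" "b \<in> ty_simples N" "c \<in> ty_simples N" "ty_fus N a b c"
        have e: "\<eta> c * snd x a b c = snd y a b c * \<eta> a * \<eta> b" using x(5) abc by blast
        have "\<eta> a \<noteq> 0" "\<eta> b \<noteq> 0" "\<eta> c \<noteq> 0" using x(4) abc by auto
        with e show "inverse (\<eta> c) * snd y a b c = snd x a b c * inverse (\<eta> a) * inverse (\<eta> b)"
          by (simp add: field_simps)
      qed
    qed
  qed
  show "trans (ty_moniso N chi tau)"
  proof (rule transI)
    fix x y z assume "(x, y) \<in> ty_moniso N chi tau" "(y, z) \<in> ty_moniso N chi tau"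
    then obtain \<eta> \<theta> where x: "x \<in> ty_auts N chi tau" "z \<in> ty_auts N chi tau"
      "\<forall>a\<in>ty_simples N. fst x a = fst y a" "\<forall>a\<in>ty_simples N. \<eta> a \<noteq> 0"
      "\<forall>a\<in>ty_simples N. \<forall>b\<in>ty_simples N. \<forall>c\<in>ty_simples N. ty_fus N a b c \<longrightarrow>
              \<eta> c * snd x a b c = snd y a b c * \<eta> a * \<eta> b"
      "\<forall>a\<in>ty_simples N. fst y a = fst z a" "\<forall>a\<in>ty_simples N. \<theta> a \<noteq> 0"
      "\<forall>a\<in>ty_simples N. \<forall>b\<in>ty_simples N. \<forall>c\<in>ty_simples N. ty_fus N a b c \<longrightarrow>
              \<theta> c * snd y a b c = snd z a b c * \<theta> a * \<theta> b"
      unfolding ty_moniso_def by auto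
    show "(x, z) \<in> ty_moniso N chi tau"
      unfolding ty_moniso_def
    proof (simp add: x(1,2), intro conjI exI[of _ "\<lambda>a. \<theta> a * \<eta> a"])
      show "\<forall>a\<in>ty_simples N. fst x a = fst z a" using x(3,6) by simp
      show "\<forall>a\<in>ty_simples N. \<theta> a * \<eta> a \<noteq> 0" using x(4,7) by simp
      show "\<forall>a\<in>ty_simples N. \<forall>b\<in>ty_simples N. \<forall>c\<in>ty_simples N. ty_fus N a b c \<longrightarrow>
          \<theta> c * \<eta> c * snd x a b c = snd z a b c * (\<theta> a * \<eta> a) * (\<theta> b * \<eta> b)"
      proof (intro ballI impI)
        fix a b c assume abc: "a \<in> ty_simples N" "b \<in> ty_simples N" "c \<in> ty_simples N" "ty_fus N a b c"
        have e1: "\<eta> c * snd x a b c = snd y a b c * \<eta> a * \<eta> b" using x(5) abc by blast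
        have e2: "\<theta> c * snd y a b c = snd z a b c * \<theta> a * \<theta> b" using x(8) abc by blast
        have "\<theta> c * \<eta> c * snd x a b c = \<theta> c * snd y a b c * \<eta> a * \<eta> b"
          using e1 by (metis mult.assoc)
        also have "\<dots> = snd z a b c * (\<theta> a * \<eta> a) * (\<theta> b * \<eta> b)"
          using e2 by (simp add: ac_simps)
        finally show "\<theta> c * \<eta> c * snd x a b c = snd z a b c * (\<theta> a * \<eta> a) * (\<theta> b * \<eta> b)" .
      qed
    qed
  qed
qed

lemma adm_map:
  assumes A: "ty_autoeq N chi tau (\<phi>, J)" and "ty_adm N a b c d e f"
  shows "ty_adm N (\<phi> a) (\<phi> b) (\<phi> c) (\<phi> d) (\<phi> e) (\<phi> f)"
proof -
  have inS: "\<And>a. a \<in> ty_simples N \<Longrightarrow> \<phi> a \<in> ty_simples N"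
    using autoeqD(1)[OF A] bij_betwE by blast
  show ?thesis using assms(2) autoeqD(2)[OF A] inS unfolding ty_adm_def by auto
qed

lemma comp_auts:
  assumes "x \<in> ty_auts N chi tau" "y \<in> ty_auts N chi tau" and N: "N > 1"
  shows "ty_comp x y \<in> ty_auts N chi tau"
proof -
  obtain \<phi> J where x: "x = (\<phi>, J)" by fastforce
  obtain \<psi> K where y: "y = (\<psi>, K)" by fastforce
  have A: "ty_autoeq N chi tau (\<phi>, J)" and B: "ty_autoeq N chi tau (\<psi>, K)"
    using assms x y by (auto simp: ty_auts_def)
  let ?S = "ty_simples N"
  have inS: "\<And>a. a \<in> ?S \<Longrightarrow> \<psi> a \<in> ?S"
    using autoeqD(1)[OF B] bij_betwE by blast
  have g0: "\<psi> (Gr 0) = Gr 0" using phi_facts(1)[OF B N] .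
  have "ty_autoeq N chi tau (\<phi> \<circ> \<psi>, \<lambda>a b c. J (\<psi> a) (\<psi> b) (\<psi> c) * K a b c)"
    unfolding ty_autoeq_def Let_def fst_conv snd_conv
  proof (intro conjI ballI allI impI)
    show "bij_betw (\<phi> \<circ> \<psi>) ?S ?S" using autoeqD(1)[OF A] autoeqD(1)[OF B] by (rule bij_betw_trans[rotated])
  next
    fix a b c assume "a \<in> ?S" "b \<in> ?S" "c \<in> ?S"
    thus "ty_fus N ((\<phi> \<circ> \<psi>) a) ((\<phi> \<circ> \<psi>) b) ((\<phi> \<circ> \<psi>) c) = ty_fus N a b c"
      using autoeqD(2)[OF A] autoeqD(2)[OF B] inS by simp
  next
    fix a b c assume abc: "a \<in> ?S" "b \<in> ?S" "c \<in> ?S" "ty_fus N a b c"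
    thus "J (\<psi> a) (\<psi> b) (\<psi> c) * K a b c \<noteq> 0"
      using autoeqD(3)[OF A] autoeqD(3)[OF B] autoeqD(2)[OF B] inS by simp
  next
    fix a assume a: "a \<in> ?S"
    show "J (\<psi> (Gr 0)) (\<psi> a) (\<psi> a) * K (Gr 0) a a = 1"
      using autoeqD(4)[OF A] autoeqD(4)[OF B] a inS g0 by simp
    show "J (\<psi> a) (\<psi> (Gr 0)) (\<psi> a) * K a (Gr 0) a = 1"
      using autoeqD(5)[OF A] autoeqD(5)[OF B] a inS g0 by simp
  next
    fix a b c d e f assume adm: "ty_adm N a b c d e f"
    note h1 = autoeqD(6)[OF B adm]
    note h2 = autoeqD(6)[OF A adm_map[OF B adm]]
    show "J (\<psi> a) (\<psi> b) (\<psi> e) * K a b e * (J (\<psi> e) (\<psi> c) (\<psi> d) * K e c d) * ty_F N chi tau a b c d e f =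
       ty_F N chi tau ((\<phi> \<circ> \<psi>) a) ((\<phi> \<circ> \<psi>) b) ((\<phi> \<circ> \<psi>) c) ((\<phi> \<circ> \<psi>) d) ((\<phi> \<circ> \<psi>) e) ((\<phi> \<circ> \<psi>) f) *
       (J (\<psi> b) (\<psi> c) (\<psi> f) * K b c f) * (J (\<psi> a) (\<psi> f) (\<psi> d) * K a f d)"
    proof -
      have "J (\<psi> a) (\<psi> b) (\<psi> e) * K a b e * (J (\<psi> e) (\<psi> c) (\<psi> d) * K e c d) * ty_F N chi tau a b c d e f
          = J (\<psi> a) (\<psi> b) (\<psi> e) * J (\<psi> e) (\<psi> c) (\<psi> d) * (K a b e * K e c d * ty_F N chi tau a b c d e f)"
        by (simp add: ac_simps)
      also have "\<dots> = J (\<psi> a) (\<psi> b) (\<psi> e) * J (\<psi> e) (\<psi> c) (\<psi> d) * ty_F N chi tau (\<psi> a) (\<psi> b) (\<psi> c) (\<psi> d) (\<psi> e) (\<psi> f) * (K b c f * K a f d)"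
        using h1 by (simp add: ac_simps)
      also have "\<dots> = ty_F N chi tau (\<phi> (\<psi> a)) (\<phi> (\<psi> b)) (\<phi> (\<psi> c)) (\<phi> (\<psi> d)) (\<phi> (\<psi> e)) (\<phi> (\<psi> f)) * J (\<psi> b) (\<psi> c) (\<psi> f) * J (\<psi> a) (\<psi> f) (\<psi> d) * (K b c f * K a f d)"
        using h2 by simp
      finally show ?thesis by (simp add: ac_simps)
    qed
  qed
  thus ?thesis using x y by (simp add: ty_comp_def ty_auts_def)
qed

lemma comp_resp:
  assumes xx: "(x, x') \<in> ty_moniso N chi tau" and yy: "(y, y') \<in> ty_moniso N chi tau" and N: "N > 1"
  shows "(ty_comp x y, ty_comp x' y') \<in> ty_moniso N chi tau"
proof -
  let ?S = "ty_simples N"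
  obtain \<eta> where x: "x \<in> ty_auts N chi tau" "x' \<in> ty_auts N chi tau"
      "\<forall>a\<in>?S. fst x a = fst x' a" "\<forall>a\<in>?S. \<eta> a \<noteq> 0"
      "\<forall>a\<in>?S. \<forall>b\<in>?S. \<forall>c\<in>?S. ty_fus N a b c \<longrightarrow>
              \<eta> c * snd x a b c = snd x' a b c * \<eta> a * \<eta> b"
    using xx unfolding ty_moniso_def by auto
  obtain \<theta> where y: "y \<in> ty_auts N chi tau" "y' \<in> ty_auts N chi tau"
      "\<forall>a\<in>?S. fst y a = fst y' a" "\<forall>a\<in>?S. \<theta> a \<noteq> 0"
      "\<forall>a\<in>?S. \<forall>b\<in>?S. \<forall>c\<in>?S. ty_fus N a b c \<longrightarrow>
              \<theta> c * snd y a b c = snd y' a b c * \<theta> a * \<theta> b"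
    using yy unfolding ty_moniso_def by auto
  obtain \<psi> K where yd: "y = (\<psi>, K)" by fastforce
  have B: "ty_autoeq N chi tau (\<psi>, K)" using y(1) yd by (simp add: ty_auts_def)
  have inS: "\<And>a. a \<in> ?S \<Longrightarrow> \<psi> a \<in> ?S"
    using autoeqD(1)[OF B] bij_betwE by blast
  note fusB = autoeqD(2)[OF B]
  show ?thesis
    unfolding ty_moniso_def
  proof (simp add: comp_auts[OF x(1) y(1) N] comp_auts[OF x(2) y(2) N],
      intro conjI exI[of _ "\<lambda>a. \<eta> (\<psi> a) * \<theta> a"])
    show "\<forall>a\<in>?S. fst (ty_comp x y) a = fst (ty_comp x' y') a"
      using x(3) y(3) inS yd by (simp add: ty_comp_def)
    show "\<forall>a\<in>?S. \<eta> (\<psi> a) * \<theta> a \<noteq> 0" using x(4) y(4) inS by simp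
    show "\<forall>a\<in>?S. \<forall>b\<in>?S. \<forall>c\<in>?S. ty_fus N a b c \<longrightarrow>
        \<eta> (\<psi> c) * \<theta> c * snd (ty_comp x y) a b c = snd (ty_comp x' y') a b c * (\<eta> (\<psi> a) * \<theta> a) * (\<eta> (\<psi> b) * \<theta> b)"
    proof (intro ballI impI)
      fix a b c assume abc: "a \<in> ?S" "b \<in> ?S" "c \<in> ?S" "ty_fus N a b c"
      have e1: "\<eta> (\<psi> c) * snd x (\<psi> a) (\<psi> b) (\<psi> c) = snd x' (\<psi> a) (\<psi> b) (\<psi> c) * \<eta> (\<psi> a) * \<eta> (\<psi> b)"
        using x(5) inS abc fusB by simp
      have e2: "\<theta> c * K a b c = snd y' a b c * \<theta> a * \<theta> b" using y(5) abc yd by simp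
      have ps: "fst y' a = \<psi> a" "fst y' b = \<psi> b" "fst y' c = \<psi> c" using y(3) abc yd by auto
      have "\<eta> (\<psi> c) * \<theta> c * (snd x (\<psi> a) (\<psi> b) (\<psi> c) * K a b c)
          = (\<eta> (\<psi> c) * snd x (\<psi> a) (\<psi> b) (\<psi> c)) * (\<theta> c * K a b c)" by (simp add: ac_simps)
      also have "\<dots> = snd x' (\<psi> a) (\<psi> b) (\<psi> c) * snd y' a b c * (\<eta> (\<psi> a) * \<theta> a) * (\<eta> (\<psi> b) * \<theta> b)"
        using e1 e2 by (simp add: ac_simps)
      finally show "\<eta> (\<psi> c) * \<theta> c * snd (ty_comp x y) a b c = snd (ty_comp x' y') a b c * (\<eta> (\<psi> a) * \<theta> a) * (\<eta> (\<psi> b) * \<theta> b)"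
        using yd ps by (simp add: ty_comp_def)
    qed
  qed
qed

lemma comp_assoc: "ty_comp (ty_comp x y) z = ty_comp x (ty_comp y z)"
  by (simp add: ty_comp_def o_def mult.assoc)

lemma comp_id: "ty_comp ty_id x = x"
  by (simp add: ty_comp_def ty_id_def)

lemma id_auts: "ty_id \<in> ty_auts N chi tau"
  by (simp add: ty_auts_def ty_autoeq_def ty_id_def)

lemma TenAut_mult:
  assumes "x \<in> ty_auts N chi tau" "y \<in> ty_auts N chi tau" "N > 1"
  shows "ty_moniso N chi tau `` {x} \<otimes>\<^bsub>TenAut N chi tau\<^esub> ty_moniso N chi tau `` {y}
       = ty_moniso N chi tau `` {ty_comp x y}"
proof -
  let ?M = "ty_moniso N chi tau"
  note eq = moniso_equiv[of N chi tau]
  have "(SOME x'. x' \<in> ?M `` {x}) \<in> ?M `` {x}"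
    by (rule someI) (rule equiv_class_self[OF eq assms(1)])
  hence 1: "(x, SOME x'. x' \<in> ?M `` {x}) \<in> ?M" by simp
  have "(SOME y'. y' \<in> ?M `` {y}) \<in> ?M `` {y}"
    by (rule someI) (rule equiv_class_self[OF eq assms(2)])
  hence 2: "(y, SOME y'. y' \<in> ?M `` {y}) \<in> ?M" by simp
  have "(ty_comp x y, ty_comp (SOME x'. x' \<in> ?M `` {x}) (SOME y'. y' \<in> ?M `` {y})) \<in> ?M"
    by (rule comp_resp[OF 1 2 assms(3)])
  hence "?M `` {ty_comp x y} = ?M `` {ty_comp (SOME x'. x' \<in> ?M `` {x}) (SOME y'. y' \<in> ?M `` {y})}"
    using equiv_class_eq[OF eq] by blast
  thus ?thesis by (simp add: TenAut_def)
qed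

lemma sq1_carrier:
  "n \<in> carrier (sq1_group N) \<longleftrightarrow> 0 \<le> n \<and> n < N \<and> coprime n N \<and> (n * n) mod N = 1 mod N"
  by (auto simp: sq1_group_def)

lemma Fn_auts:
  assumes "r > 0" "n \<in> carrier (sq1_group (2 * int r + 1))"
  shows "ty_Fn (2 * int r + 1) n \<in> ty_auts (2 * int r + 1) (ty_chi r) tau"
  using Fn_autoeq[of "2 * int r + 1" n "ty_chi r" tau] ty_chi_inv[of n r] assms
  by (auto simp: sq1_carrier ty_auts_def)

lemma classify:
  assumes r: "r > 0" and x: "x \<in> ty_auts (2 * int r + 1) (ty_chi r) tau"
  shows "\<exists>n \<in> carrier (sq1_group (2 * int r + 1)). (x, ty_Fn (2 * int r + 1) n) \<in> ty_moniso (2 * int r + 1) (ty_chi r) tau"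
proof -
  let ?N = "2 * int r + 1"
  obtain \<phi> J where xd: "x = (\<phi>, J)" by fastforce
  have A: "ty_autoeq ?N (ty_chi r) tau (\<phi>, J)" using x xd by (simp add: ty_auts_def)
  have N: "?N > 1" using r by simp
  obtain n where n: "0 \<le> n" "n < ?N" "\<And>i. 0 \<le> i \<Longrightarrow> i < ?N \<Longrightarrow> \<phi> (Gr i) = Gr ((n * i) mod ?N)"
    using phi_mult[OF A N] by blast
  have "ty_chi r 1 1 = ty_chi r ((n * 1) mod ?N) ((n * 1) mod ?N)"
    by (rule chi_invariant[OF A N n(3)]) (use N in auto)
  hence "ty_chi r 1 1 = ty_chi r n n" using n by simp
  hence n2: "(n * n) mod ?N = 1 mod ?N" using ty_chi_sq1[OF r] by simp
  have nc: "n \<in> carrier (sq1_group ?N)"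
    using n n2 sq1_coprime[OF n2] by (simp add: sq1_carrier)
  have Fa: "ty_Fn ?N n \<in> ty_auts ?N (ty_chi r) tau" by (rule Fn_auts[OF r nc])
  obtain \<eta> where eta: "\<forall>a\<in>ty_simples ?N. \<eta> a \<noteq> 0"
    "\<forall>a\<in>ty_simples ?N. \<forall>b\<in>ty_simples ?N. \<forall>c\<in>ty_simples ?N. ty_fus ?N a b c \<longrightarrow>
              \<eta> c * J a b c = 1 * \<eta> a * \<eta> b"
    using gauge[OF A N] by blast
  have agree: "\<forall>a\<in>ty_simples ?N. \<phi> a = ty_mult_obj ?N n a"
  proof
    fix a assume a: "a \<in> ty_simples ?N"
    show "\<phi> a = ty_mult_obj ?N n a"
    proof (cases a)
      case (Gr i) thus ?thesis using a n(3) by (auto simp: ty_simples_def)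
    next
      case Mo thus ?thesis using phi_facts(2)[OF A N] by simp
    qed
  qed
  have "(x, ty_Fn ?N n) \<in> ty_moniso ?N (ty_chi r) tau"
    unfolding ty_moniso_def using x Fa agree eta xd by (auto simp: ty_Fn_def)
  thus ?thesis using nc by blast
qed

lemma Fn_comp:
  assumes r: "r > 0" and n: "n \<in> carrier (sq1_group (2 * int r + 1))" and m: "m \<in> carrier (sq1_group (2 * int r + 1))"
  shows "(n * m) mod (2 * int r + 1) \<in> carrier (sq1_group (2 * int r + 1))"
    and "(ty_comp (ty_Fn (2 * int r + 1) n) (ty_Fn (2 * int r + 1) m), ty_Fn (2 * int r + 1) ((n * m) mod (2 * int r + 1)))
         \<in> ty_moniso (2 * int r + 1) (ty_chi r) tau"
proof -
  let ?N = "2 * int r + 1"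
  have N: "?N > 1" using r by simp
  have n2: "(n * n) mod ?N = 1 mod ?N" and m2: "(m * m) mod ?N = 1 mod ?N" using n m by (auto simp: sq1_carrier)
  have "((n * m) mod ?N * ((n * m) mod ?N)) mod ?N = ((n * n) * (m * m)) mod ?N"
    by (metis (no_types, lifting) mod_mult_left_eq mod_mult_right_eq mult.assoc mult.left_commute)
  also have "\<dots> = (((n * n) mod ?N) * ((m * m) mod ?N)) mod ?N" by (simp add: mod_mult_eq)
  also have "\<dots> = 1 mod ?N" using n2 m2 N by simp
  finally have p2: "((n * m) mod ?N * ((n * m) mod ?N)) mod ?N = 1 mod ?N" .
  show pc: "(n * m) mod ?N \<in> carrier (sq1_group ?N)"
  proof -
    have N0: "?N > 0" using N by linarith
    have "0 \<le> (n * m) mod ?N" "(n * m) mod ?N < ?N"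
      using pos_mod_sign[OF N0] pos_mod_bound[OF N0] by blast+
    thus ?thesis using p2 sq1_coprime[OF p2] by (simp only: sq1_carrier)
  qed
  have c1: "ty_comp (ty_Fn ?N n) (ty_Fn ?N m) \<in> ty_auts ?N (ty_chi r) tau"
    by (rule comp_auts[OF Fn_auts[OF r n] Fn_auts[OF r m] N])
  have c2: "ty_Fn ?N ((n * m) mod ?N) \<in> ty_auts ?N (ty_chi r) tau" by (rule Fn_auts[OF r pc])
  have agree: "ty_mult_obj ?N n (ty_mult_obj ?N m a) = ty_mult_obj ?N ((n * m) mod ?N) a" for a
  proof (cases a)
    case (Gr i)
    have "(n * (m * i mod ?N)) mod ?N = ((n * m) mod ?N * i) mod ?N"
      by (metis mod_mult_left_eq mod_mult_right_eq mult.assoc)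
    thus ?thesis using Gr by simp
  qed simp
  show "(ty_comp (ty_Fn ?N n) (ty_Fn ?N m), ty_Fn ?N ((n * m) mod ?N)) \<in> ty_moniso ?N (ty_chi r) tau"
    unfolding ty_moniso_def using c1 c2 agree
    by (auto simp: ty_comp_def ty_Fn_def intro!: exI[of _ "\<lambda>_. 1"])
qed

lemma Fn_one:
  assumes r: "r > 0"
  shows "(ty_Fn (2 * int r + 1) 1, ty_id) \<in> ty_moniso (2 * int r + 1) (ty_chi r) tau"
proof -
  let ?N = "2 * int r + 1"
  have c: "1 \<in> carrier (sq1_group ?N)" using r by (simp add: sq1_carrier)
  have agree: "\<forall>a\<in>ty_simples ?N. ty_mult_obj ?N 1 a = id a"
    by (auto simp: ty_simples_def)
  show ?thesis
    unfolding ty_moniso_def using Fn_auts[OF r c] id_auts agree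
    by (auto simp: ty_id_def ty_Fn_def intro!: exI[of _ "\<lambda>_. 1"])
qed

lemma Fn_inj:
  assumes r: "r > 0" and n: "n \<in> carrier (sq1_group (2 * int r + 1))" and m: "m \<in> carrier (sq1_group (2 * int r + 1))"
    and "(ty_Fn (2 * int r + 1) n, ty_Fn (2 * int r + 1) m) \<in> ty_moniso (2 * int r + 1) (ty_chi r) tau"
  shows "n = m"
proof -
  let ?N = "2 * int r + 1"
  have "Gr 1 \<in> ty_simples ?N" using r by (simp add: ty_simples_def)
  hence "ty_mult_obj ?N n (Gr 1) = ty_mult_obj ?N m (Gr 1)"
    using assms(4) by (auto simp: ty_moniso_def ty_Fn_def)
  thus ?thesis using n m by (simp add: sq1_carrier)
qed

theorem lemma4p6:
  fixes r :: nat and tau :: complex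
  assumes "r > 0" and "tau = 1 \<or> tau = -1"
  shows "(\<forall>n \<in> carrier (sq1_group (2 * int r + 1)).
            ty_autoeq (2 * int r + 1) (ty_chi r) tau (ty_Fn (2 * int r + 1) n)) \<and>
         group (TenAut (2 * int r + 1) (ty_chi r) tau) \<and>
         (\<lambda>n. ty_moniso (2 * int r + 1) (ty_chi r) tau `` {ty_Fn (2 * int r + 1) n})
           \<in> iso (sq1_group (2 * int r + 1)) (TenAut (2 * int r + 1) (ty_chi r) tau)"
proof -
  let ?N = "2 * int r + 1" and ?chi = "ty_chi r"
  let ?M = "ty_moniso ?N ?chi tau" and ?A = "ty_auts ?N ?chi tau" and ?G = "TenAut ?N ?chi tau"
  have r: "r > 0" by fact
  have N: "?N > 1" using r by simp
  note eq = moniso_equiv[of ?N ?chi tau]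
  have carr: "carrier ?G = ?A // ?M" by (simp add: TenAut_def)
  have one: "\<one>\<^bsub>?G\<^esub> = ?M `` {ty_id}" by (simp add: TenAut_def)
  note mult = TenAut_mult[OF _ _ N, of _ ?chi tau]
  have P1: "\<forall>n \<in> carrier (sq1_group ?N). ty_autoeq ?N ?chi tau (ty_Fn ?N n)"
    using Fn_auts[OF r] by (simp add: ty_auts_def)
  have P2: "group ?G"
  proof (rule groupI)
    fix X Y assume "X \<in> carrier ?G" "Y \<in> carrier ?G"
    then obtain x y where "X = ?M `` {x}" "x \<in> ?A" "Y = ?M `` {y}" "y \<in> ?A"
      unfolding carr by (metis quotientE)
    thus "X \<otimes>\<^bsub>?G\<^esub> Y \<in> carrier ?G"
      using mult comp_auts[OF _ _ N] carr by (simp add: quotientI)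
  next
    show "\<one>\<^bsub>?G\<^esub> \<in> carrier ?G" using one carr id_auts by (simp add: quotientI)
  next
    fix X Y Z assume "X \<in> carrier ?G" "Y \<in> carrier ?G" "Z \<in> carrier ?G"
    then obtain x y z where "X = ?M `` {x}" "x \<in> ?A" "Y = ?M `` {y}" "y \<in> ?A" "Z = ?M `` {z}" "z \<in> ?A"
      unfolding carr by (metis quotientE)
    thus "X \<otimes>\<^bsub>?G\<^esub> Y \<otimes>\<^bsub>?G\<^esub> Z = X \<otimes>\<^bsub>?G\<^esub> (Y \<otimes>\<^bsub>?G\<^esub> Z)"
      using mult comp_auts[OF _ _ N] by (simp add: comp_assoc)
  next
    fix X assume "X \<in> carrier ?G"
    then obtain x where "X = ?M `` {x}" "x \<in> ?A"
      unfolding carr by (metis quotientE)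
    thus "\<one>\<^bsub>?G\<^esub> \<otimes>\<^bsub>?G\<^esub> X = X"
      using mult one id_auts by (simp add: comp_id)
  next
    fix X assume "X \<in> carrier ?G"
    then obtain x where X: "X = ?M `` {x}" "x \<in> ?A"
      unfolding carr by (metis quotientE)
    obtain n where n: "n \<in> carrier (sq1_group ?N)" "(x, ty_Fn ?N n) \<in> ?M"
      using classify[OF r X(2)] by blast
    have Fa: "ty_Fn ?N n \<in> ?A" by (rule Fn_auts[OF r n(1)])
    have "(ty_comp (ty_Fn ?N n) x, ty_comp (ty_Fn ?N n) (ty_Fn ?N n)) \<in> ?M"
      by (rule comp_resp[OF _ n(2) N]) (rule equiv_class_self[OF eq Fa, simplified])
    moreover have "(ty_comp (ty_Fn ?N n) (ty_Fn ?N n), ty_Fn ?N ((n * n) mod ?N)) \<in> ?M"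
      by (rule Fn_comp(2)[OF r n(1) n(1)])
    moreover have "(n * n) mod ?N = 1" using n(1) N by (simp add: sq1_carrier)
    moreover have tr: "trans ?M" using eq by (simp add: equiv_def)
    ultimately have "(ty_comp (ty_Fn ?N n) x, ty_id) \<in> ?M"
      using Fn_one[OF r, of tau] by (metis transD)
    hence "?M `` {ty_comp (ty_Fn ?N n) x} = ?M `` {ty_id}"
      using equiv_class_eq[OF eq] by blast
    hence "?M `` {ty_Fn ?N n} \<otimes>\<^bsub>?G\<^esub> X = \<one>\<^bsub>?G\<^esub>"
      using mult[OF Fa X(2)] X(1) one by simp
    moreover have "?M `` {ty_Fn ?N n} \<in> carrier ?G" using Fa carr by (simp add: quotientI)
    ultimately show "\<exists>Y\<in>carrier ?G. Y \<otimes>\<^bsub>?G\<^esub> X = \<one>\<^bsub>?G\<^esub>" by blast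
  qed
  let ?f = "\<lambda>n. ?M `` {ty_Fn ?N n}"
  have fc: "?f \<in> carrier (sq1_group ?N) \<rightarrow> carrier ?G"
    using Fn_auts[OF r] carr by (auto simp: quotientI)
  have hom: "?f \<in> hom (sq1_group ?N) ?G"
  proof (rule homI)
    fix n assume "n \<in> carrier (sq1_group ?N)" thus "?f n \<in> carrier ?G" using fc by blast
  next
    fix n m assume n: "n \<in> carrier (sq1_group ?N)" and m: "m \<in> carrier (sq1_group ?N)"
    have "?f n \<otimes>\<^bsub>?G\<^esub> ?f m = ?M `` {ty_comp (ty_Fn ?N n) (ty_Fn ?N m)}"
      by (rule mult[OF Fn_auts[OF r n] Fn_auts[OF r m]])
    also have "\<dots> = ?M `` {ty_Fn ?N ((n * m) mod ?N)}"
      using Fn_comp(2)[OF r n m, of tau] equiv_class_eq[OF eq] by blast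
    finally show "?f (n \<otimes>\<^bsub>sq1_group ?N\<^esub> m) = ?f n \<otimes>\<^bsub>?G\<^esub> ?f m"
      by (simp add: sq1_group_def)
  qed
  have bij: "bij_betw ?f (carrier (sq1_group ?N)) (carrier ?G)"
  proof (rule bij_betw_imageI)
    show "inj_on ?f (carrier (sq1_group ?N))"
    proof (rule inj_onI)
      fix n m assume n: "n \<in> carrier (sq1_group ?N)" and m: "m \<in> carrier (sq1_group ?N)"
        and e: "?f n = ?f m"
      have "(ty_Fn ?N n, ty_Fn ?N m) \<in> ?M"
        using e eq_equiv_class_iff[OF eq Fn_auts[OF r n] Fn_auts[OF r m]] by blast
      thus "n = m" by (rule Fn_inj[OF r n m])
    qed
    show "?f ` carrier (sq1_group ?N) = carrier ?G"
    proof
      show "?f ` carrier (sq1_group ?N) \<subseteq> carrier ?G" using fc by blast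
      show "carrier ?G \<subseteq> ?f ` carrier (sq1_group ?N)"
      proof
        fix X assume "X \<in> carrier ?G"
        then obtain x where X: "X = ?M `` {x}" "x \<in> ?A"
          unfolding carr by (metis quotientE)
        obtain n where n: "n \<in> carrier (sq1_group ?N)" "(x, ty_Fn ?N n) \<in> ?M"
          using classify[OF r X(2)] by blast
        have "X = ?f n" using X(1) n(2) equiv_class_eq[OF eq] by blast
        thus "X \<in> ?f ` carrier (sq1_group ?N)" using n(1) by blast
      qed
    qed
  qed
  show ?thesis using P1 P2 hom bij by (simp add: iso_def)
qed

end
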